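(* Let $B>0$ and let $(X_s,Y_s)_{s\ge1}$ be any sequence with $X_s\in\mathbb R^p$, $\|X_s\|_2\le1$, $Y_s\in\mathbb R$. Let $\ell_s(\theta)=\tfrac12(\langle\theta,X_s\rangle-Y_s)^2$ and $\mathcal L_s(Q)=-\log\int_{\mathbb R^p}e^{-\ell_s(\theta)}\,\mathrm dQ(\theta)$ for a probability measure $Q$. Consider the exponentially weighted average (EWA) forecaster with prior $Q_1$ equal to the uniform distribution on $\mathcal B(B+1)$, i.e. $\mathrm dQ_s(\theta)\propto\exp(-\sum_{r=1}^{s-1}\ell_r(\theta))\,\mathrm dQ_1(\theta)$ for $s\ge1$. Then for all $\bar\theta\in\mathcal B(B)$ and all $t\ge1$, $$\sum_{s=1}^t\mathcal L_s(Q_s)-\sum_{s=1}^t\ell_s(\bar\theta)\le\frac p2\log\frac{(B+1)^2e\max(p,t)}{p}.$$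
   Context: $\langle\cdot,\cdot\rangle$ is the Euclidean inner product on $\mathbb R^p$ and $\mathcal B(r)$ the closed centred Euclidean ball of radius $r$ in $\mathbb R^p$. *)

theory Defs
  imports "HOL-Probability.Probability"
begin

definition sq_loss :: "(nat \<Rightarrow> 'a::euclidean_space) \<Rightarrow> (nat \<Rightarrow> real) \<Rightarrow> nat \<Rightarrow> 'a \<Rightarrow> real" where
  "sq_loss X Y s \<theta> = (1/2) * (\<theta> \<bullet> X s - Y s)^2"

definition mix_loss :: "'a measure \<Rightarrow> ('a \<Rightarrow> real) \<Rightarrow> real" where
  "mix_loss Q f = - ln (\<integral>\<theta>. exp (- f \<theta>) \<partial>Q)"

definition unif_ball :: "real \<Rightarrow> 'a::euclidean_space measure" where
  "unif_ball r = uniform_measure lborel (cball 0 r)"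

definition ewa :: "'a::euclidean_space measure \<Rightarrow> (nat \<Rightarrow> 'a \<Rightarrow> real) \<Rightarrow> nat \<Rightarrow> 'a measure" where
  "ewa Q1 l s = density Q1 (\<lambda>\<theta>. ennreal (exp (- (\<Sum>r\<in>{1..<s}. l r \<theta>))
        / (\<integral>\<eta>. exp (- (\<Sum>r\<in>{1..<s}. l r \<eta>)) \<partial>Q1)))"

end

theory Submission
  imports Defs
begin

lemma exp_avg: fixes a b :: real shows "exp ((a+b)/2) \<le> (exp a + exp b)/2"
proof -
  have "0 \<le> (exp (a/2) - exp (b/2))^2" by simp
  moreover have "exp a = exp (a/2)^2" "exp b = exp (b/2)^2"
    by (simp_all add: power2_eq_square flip: exp_add)
  moreover have "exp ((a+b)/2) = exp (a/2) * exp (b/2)" by (simp add: add_divide_distrib exp_add)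
  ultimately show ?thesis by (simp add: power2_eq_square algebra_simps)
qed

lemma sq_loss_pair:
  "sq_loss X Y r (th + u) + sq_loss X Y r (th - u) = 2 * sq_loss X Y r th + (u \<bullet> X r)^2"
  unfolding sq_loss_def by (simp add: inner_add_left inner_diff_left power2_eq_square algebra_simps)

lemma reflect_lborel:
  fixes h :: "'a::euclidean_space \<Rightarrow> real"
  assumes [measurable]: "h \<in> borel_measurable borel"
  shows "(\<integral>x. h x \<partial>lborel) = (\<integral>x. h (t - x) \<partial>lborel)"
proof -
  have "lborel = density (distr lborel borel (\<lambda>x. t + (-1) *\<^sub>R x)) (\<lambda>_. \<bar>-1::real\<bar>^DIM('a))"
    by (rule lborel_affine) simp
  hence e: "(lborel::'a measure) = distr lborel borel (\<lambda>x. t - x)" by (simp add: density_1)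
  have "(\<integral>x. h x \<partial>lborel) = (\<integral>x. h x \<partial>(distr lborel borel (\<lambda>x. t - x)))"
    by (subst e[symmetric]) (rule refl)
  also have "\<dots> = (\<integral>x. h (t - x) \<partial>lborel)"
    by (rule integral_distr) auto
  finally show ?thesis .
qed


lemma ball_lower:
  fixes g :: "'a::euclidean_space \<Rightarrow> real" and th :: 'a
  assumes g: "continuous_on UNIV g"
    and c: "\<And>x. x \<in> cball th e \<Longrightarrow> c \<le> (g x + g (2 *\<^sub>R th - x)) / 2"
  shows "c * measure lborel (cball th e) \<le> (\<integral>x. indicator (cball th e) x * g x \<partial>lborel)"
proof -
  define A where "A = cball th e"
  define t where "t = 2 *\<^sub>R th"
  have gm[measurable]: "g \<in> borel_measurable borel" by (rule borel_measurable_continuous_onI[OF g])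
  have A[measurable]: "A \<in> sets borel" unfolding A_def by simp
  have cA: "compact A" unfolding A_def by simp
  have g2: "continuous_on UNIV (\<lambda>x. g (t - x))"
    by (intro continuous_on_compose2[OF g] continuous_intros) auto
  have i1: "integrable lborel (\<lambda>x. indicator A x * g x)"
    using borel_integrable_compact[OF cA continuous_on_subset[OF g]] by simp
  have i2: "integrable lborel (\<lambda>x. indicator A x * g (t - x))"
    using borel_integrable_compact[OF cA continuous_on_subset[OF g2]] by simp
  have iA: "integrable lborel (\<lambda>x. indicator A x * c)"
    using borel_integrable_compact[OF cA continuous_on_const[of A c]] by simp
  have indA: "indicator A (t - x) = (indicator A x :: real)" for x
  proof -
    have "dist th (t - x) = dist th x" unfolding t_def dist_norm
      by (simp add: dist_norm scaleR_2 algebra_simps norm_minus_commute)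
    thus ?thesis unfolding A_def indicator_def by simp
  qed
  have "(\<integral>x. indicator A x * g x \<partial>lborel) = (\<integral>x. indicator A (t - x) * g (t - x) \<partial>lborel)"
    by (rule reflect_lborel) measurable
  also have "\<dots> = (\<integral>x. indicator A x * g (t - x) \<partial>lborel)" by (simp add: indA)
  finally have r: "(\<integral>x. indicator A x * g x \<partial>lborel) = (\<integral>x. indicator A x * g (t - x) \<partial>lborel)" .
  have "(\<integral>x. indicator A x * c \<partial>lborel) \<le> (\<integral>x. indicator A x * ((g x + g (t - x))/2) \<partial>lborel)"
  proof -
    have g3: "continuous_on A (\<lambda>x. (g x + g (t - x))/2)"
      by (intro continuous_intros continuous_on_subset[OF g] continuous_on_subset[OF g2]) auto
    have iB: "integrable lborel (\<lambda>x. indicator A x * ((g x + g (t - x))/2))"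
      using borel_integrable_compact[OF cA g3] by simp
    show ?thesis
      by (rule integral_mono[OF iA iB]) (use c in \<open>auto simp: A_def t_def indicator_def\<close>)
  qed
  also have "\<dots> = ((\<integral>x. indicator A x * g x \<partial>lborel) + (\<integral>x. indicator A x * g (t - x) \<partial>lborel)) / 2"
  proof -
    have "(\<integral>x. indicator A x * ((g x + g (t - x))/2) \<partial>lborel) = (\<integral>x. (indicator A x * g x + indicator A x * g (t - x)) / 2 \<partial>lborel)"
      by (rule Bochner_Integration.integral_cong) (simp_all add: distrib_left)
    also have "\<dots> = (\<integral>x. (indicator A x * g x + indicator A x * g (t - x)) \<partial>lborel) / 2"
      by (rule integral_divide_zero)
    also have "\<dots> = ((\<integral>x. indicator A x * g x \<partial>lborel) + (\<integral>x. indicator A x * g (t - x) \<partial>lborel)) / 2"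
      by (simp add: Bochner_Integration.integral_add[OF i1 i2])
    finally show ?thesis .
  qed
  also have "\<dots> = (\<integral>x. indicator A x * g x \<partial>lborel)" using r by simp
  finally have *: "(\<integral>x. indicator A x * c \<partial>lborel) \<le> (\<integral>x. indicator A x * g x \<partial>lborel)" .
  have "(\<integral>x. indicator A x * c \<partial>lborel) = measure lborel A * c"
    by (simp add: A_def)
  with * show ?thesis unfolding A_def by (simp add: mult.commute)
qed


lemma unif_ball_eq:
  assumes "R > 0"
  shows "unif_ball R = density lborel (\<lambda>x. ennreal (indicator (cball (0::'a::euclidean_space) R) x / measure lborel (cball (0::'a) R)))"
proof -
  define m where "m = measure lborel (cball (0::'a) R)"
  have mpos: "m > 0" unfolding m_def using assms by (simp add: content_cball)
  have em: "emeasure lborel (cball (0::'a) R) = ennreal m"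
    unfolding m_def using assms by (simp add: emeasure_cball content_cball)
  show ?thesis unfolding unif_ball_def uniform_measure_def em m_def[symmetric]
    by (intro arg_cong[where f="density lborel"] ext)
       (simp add: divide_ennreal[OF _ mpos] flip: ennreal_indicator)
qed

lemma unif_ball_integral:
  fixes g :: "'a::euclidean_space \<Rightarrow> real"
  assumes "R > 0" and [measurable]: "g \<in> borel_measurable borel"
  shows "(\<integral>x. g x \<partial>unif_ball R) = (\<integral>x. indicator (cball 0 R) x * g x \<partial>lborel) / measure lborel (cball (0::'a) R)"
proof -
  have [measurable]: "cball (0::'a) R \<in> sets borel" by simp
  have "(\<integral>x. g x \<partial>unif_ball R) = (\<integral>x. (indicator (cball (0::'a) R) x / measure lborel (cball (0::'a) R)) * g x \<partial>lborel)"
    unfolding unif_ball_eq[OF assms(1)]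
    by (subst integral_density) auto
  also have "\<dots> = (\<integral>x. indicator (cball 0 R) x * g x / measure lborel (cball (0::'a) R) \<partial>lborel)"
    by (rule Bochner_Integration.integral_cong) simp_all
  also have "\<dots> = (\<integral>x. indicator (cball 0 R) x * g x \<partial>lborel) / measure lborel (cball (0::'a) R)"
    by (rule integral_divide_zero)
  finally show ?thesis .
qed

lemma prob_unif_ball: "R > 0 \<Longrightarrow> prob_space (unif_ball R :: 'a::euclidean_space measure)"
proof -
  assume R: "R > 0"
  have u: "unit_ball_vol (real DIM('a)) > 0" by (rule unit_ball_vol_pos) simp
  have pos: "unit_ball_vol (real DIM('a)) * R ^ DIM('a) > 0" by (rule mult_pos_pos[OF u zero_less_power[OF R]])
  have e: "emeasure lborel (cball (0::'a) R) = ennreal (unit_ball_vol (real DIM('a)) * R ^ DIM('a))"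
    by (rule emeasure_cball) (rule less_imp_le[OF R])
  have "emeasure lborel (cball (0::'a) R) \<noteq> 0" unfolding e using pos ennreal_eq_0_iff by auto
  moreover have "emeasure lborel (cball (0::'a) R) \<noteq> \<infinity>" unfolding e by simp
  ultimately show ?thesis unfolding unif_ball_def by (rule prob_space_uniform_measure)
qed


lemma sq_loss_cont: "continuous_on UNIV (\<lambda>x. exp (- (\<Sum>r\<in>I. sq_loss X Y r x)))"
  unfolding sq_loss_def by (intro continuous_intros)

lemma lin_aux: fixes a b c q k :: real shows "a + b = 2*c + q \<Longrightarrow> q \<le> k \<Longrightarrow> -c - k/2 \<le> (-a + -b)/2"
  by (simp add: field_simps)

lemma pair_bound:
  fixes th u :: "'a::euclidean_space"
  assumes I: "finite I" and X: "\<And>r. r \<in> I \<Longrightarrow> norm (X r) \<le> 1" and u: "norm u \<le> e"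
  shows "exp (- (\<Sum>r\<in>I. sq_loss X Y r th) - real (card I) * e^2 / 2)
     \<le> (exp (- (\<Sum>r\<in>I. sq_loss X Y r (th + u))) + exp (- (\<Sum>r\<in>I. sq_loss X Y r (th - u)))) / 2"
proof -
  let ?S = "\<lambda>x. \<Sum>r\<in>I. sq_loss X Y r x"
  have e0: "0 \<le> e" using u norm_ge_zero order_trans by blast
  have sum: "?S (th + u) + ?S (th - u) = 2 * ?S th + (\<Sum>r\<in>I. (u \<bullet> X r)^2)"
    by (simp add: sum.distrib[symmetric] sq_loss_pair sum_distrib_left)
  have "(\<Sum>r\<in>I. (u \<bullet> X r)^2) \<le> (\<Sum>r\<in>I. e^2)"
  proof (rule sum_mono)
    fix r assume r: "r \<in> I"
    have "\<bar>u \<bullet> X r\<bar> \<le> norm u * norm (X r)" by (rule Cauchy_Schwarz_ineq2)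
    also have "\<dots> \<le> e * 1" using X[OF r] u e0 by (intro mult_mono) auto
    finally have "\<bar>u \<bullet> X r\<bar> \<le> e" by simp
    hence "\<bar>u \<bullet> X r\<bar>^2 \<le> e^2" by (intro power_mono) auto
    thus "(u \<bullet> X r)^2 \<le> e^2" by simp
  qed
  hence sb: "(\<Sum>r\<in>I. (u \<bullet> X r)^2) \<le> real (card I) * e^2" by simp
  have "- ?S th - real (card I) * e^2 / 2 \<le> (- ?S (th + u) + - ?S (th - u)) / 2"
    by (rule lin_aux[OF sum sb])
  hence "exp (- ?S th - real (card I) * e^2 / 2) \<le> exp ((- ?S (th + u) + - ?S (th - u)) / 2)"
    by simp
  also have "\<dots> \<le> (exp (- ?S (th + u)) + exp (- ?S (th - u))) / 2" by (rule exp_avg)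
  finally show ?thesis .
qed

lemma Z_lower:
  fixes th :: "'a::euclidean_space"
  assumes B: "B > 0" and e: "0 < e" "e \<le> 1" and th: "norm th \<le> B"
    and I: "finite I" and X: "\<And>r. r \<in> I \<Longrightarrow> norm (X r) \<le> 1"
  shows "exp (- (\<Sum>r\<in>I. sq_loss X Y r th) - real (card I) * e^2 / 2) * (e / (B + 1)) ^ DIM('a)
     \<le> (\<integral>x. exp (- (\<Sum>r\<in>I. sq_loss X Y r x)) \<partial>unif_ball (B + 1))"
proof -
  define g where "g = (\<lambda>x::'a. exp (- (\<Sum>r\<in>I. sq_loss X Y r x)))"
  define c where "c = exp (- (\<Sum>r\<in>I. sq_loss X Y r th) - real (card I) * e^2 / 2)"
  define R where "R = B + 1"
  have R: "R > 0" unfolding R_def using B by simp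
  have gc: "continuous_on UNIV g" unfolding g_def by (rule sq_loss_cont)
  have gm[measurable]: "g \<in> borel_measurable borel" by (rule borel_measurable_continuous_onI[OF gc])
  have cpt: "c \<le> (g x + g (2 *\<^sub>R th - x)) / 2" if "x \<in> cball th e" for x
  proof -
    have "norm (x - th) \<le> e" using that by (simp add: dist_norm norm_minus_commute)
    from pair_bound[where th=th and Y=Y, OF I X this]
    have "c \<le> (g (th + (x - th)) + g (th - (x - th))) / 2" unfolding c_def g_def by simp
    moreover have "th - (x - th) = 2 *\<^sub>R th - x" by (simp add: scaleR_2 algebra_simps)
    ultimately show ?thesis by simp
  qed
  have low: "c * measure lborel (cball th e) \<le> (\<integral>x. indicator (cball th e) x * g x \<partial>lborel)"
    by (rule ball_lower[OF gc cpt])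
  have sub: "cball th e \<subseteq> cball 0 R"
  proof
    fix x assume "x \<in> cball th e"
    hence "norm (x - th) \<le> e" by (simp add: dist_norm norm_minus_commute)
    hence "norm x \<le> norm th + e" using norm_triangle_sub[of x th] by linarith
    thus "x \<in> cball 0 R" unfolding R_def using th e by simp
  qed
  have gnn: "0 \<le> g x" for x unfolding g_def by simp
  have mono: "(\<integral>x. indicator (cball th e) x * g x \<partial>lborel) \<le> (\<integral>x. indicator (cball 0 R) x * g x \<partial>lborel)"
  proof (rule integral_mono)
    show "integrable lborel (\<lambda>x. indicator (cball th e) x * g x)"
      using borel_integrable_compact[OF compact_cball continuous_on_subset[OF gc]] by simp
    show "integrable lborel (\<lambda>x. indicator (cball 0 R) x * g x)"
      using borel_integrable_compact[OF compact_cball continuous_on_subset[OF gc]] by simp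
    show "indicator (cball th e) x * g x \<le> indicator (cball 0 R) x * g x" for x
      using sub gnn[of x] by (auto simp: indicator_def)
  qed
  have u: "unit_ball_vol (real DIM('a)) > 0" by (rule unit_ball_vol_pos) simp
  have mA: "measure lborel (cball th e) = unit_ball_vol (real DIM('a)) * e ^ DIM('a)"
    by (rule content_cball) (use e in simp)
  have mC: "measure lborel (cball (0::'a) R) = unit_ball_vol (real DIM('a)) * R ^ DIM('a)"
    by (rule content_cball) (use R in simp)
  have ratio: "measure lborel (cball th e) / measure lborel (cball (0::'a) R) = (e / R) ^ DIM('a)"
  proof -
    have u': "unit_ball_vol (real DIM('a)) \<noteq> 0" using u by linarith
    show ?thesis unfolding mA mC using u' by (simp add: power_divide)
  qed
  have mCpos: "measure lborel (cball (0::'a) R) > 0" unfolding mC by (rule mult_pos_pos[OF u zero_less_power[OF R]])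
  have "c * (e / R) ^ DIM('a) = c * measure lborel (cball th e) / measure lborel (cball (0::'a) R)"
    by (simp add: ratio[symmetric])
  also have "\<dots> \<le> (\<integral>x. indicator (cball 0 R) x * g x \<partial>lborel) / measure lborel (cball (0::'a) R)"
    using low mono mCpos by (intro divide_right_mono) auto
  also have "\<dots> = (\<integral>x. g x \<partial>unif_ball R)"
    by (rule unif_ball_integral[OF R gm, symmetric])
  finally show ?thesis unfolding c_def g_def R_def .
qed


lemma telescope_nat: "(\<Sum>s=1..t. (f s - f (Suc s))) = f 1 - f (Suc t)" for f :: "nat \<Rightarrow> real"
  by (induction t) (auto simp: sum.atLeast_Suc_atMost_Suc_shift)

lemma unif_ball_meas:
  fixes f :: "'a::euclidean_space \<Rightarrow> 'b::topological_space"
  shows "(f \<in> borel_measurable (unif_ball R :: 'a::euclidean_space measure)) = (f \<in> borel_measurable borel)"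
proof -
  have ss: "sets (unif_ball R :: 'a measure) = sets borel" by (simp add: unif_ball_def)
  show ?thesis by (subst measurable_cong_sets[OF ss refl]) (rule refl)
qed

theorem proposition2:
  fixes B :: real and X :: "nat \<Rightarrow> 'a::euclidean_space" and Y :: "nat \<Rightarrow> real"
    and \<theta>bar :: 'a and t :: nat
  assumes "B > 0"
    and "\<And>s. s \<ge> 1 \<Longrightarrow> norm (X s) \<le> 1"
    and "norm \<theta>bar \<le> B"
    and "t \<ge> 1"
  shows "(\<Sum>s=1..t. mix_loss (ewa (unif_ball (B + 1)) (sq_loss X Y) s) (sq_loss X Y s))
           - (\<Sum>s=1..t. sq_loss X Y s \<theta>bar)
         \<le> real DIM('a) / 2 * ln ((B + 1)^2 * exp 1 * max (real DIM('a)) (real t) / real DIM('a))"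
proof -
  note B = assms(1) and Xb = assms(2) and th = assms(3) and t1 = assms(4)
  define Q1 where "Q1 = (unif_ball (B + 1) :: 'a measure)"
  define F where "F = (\<lambda>s (x::'a). exp (- (\<Sum>r\<in>{1..<s}. sq_loss X Y r x)))"
  define Z where "Z = (\<lambda>s. \<integral>x. F s x \<partial>Q1)"
  have R: "B + 1 > 0" using B by simp
  interpret P: prob_space Q1 unfolding Q1_def by (rule prob_unif_ball[OF R])
  have XI: "\<And>r. r \<in> {1..<s} \<Longrightarrow> norm (X r) \<le> 1" for s using Xb by auto
  have Fm[measurable]: "F s \<in> borel_measurable Q1" for s
    unfolding Q1_def unif_ball_meas F_def sq_loss_def by measurable
  have Zpos: "Z s > 0" for s
  proof -
    have "exp (- (\<Sum>r\<in>{1..<s}. sq_loss X Y r 0) - real (card {1..<s}) * 1^2 / 2) * (1 / (B + 1)) ^ DIM('a)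
       \<le> (\<integral>x. exp (- (\<Sum>r\<in>{1..<s}. sq_loss X Y r x)) \<partial>unif_ball (B + 1))"
      by (rule Z_lower[OF B _ _ _ _ XI]) (use B in auto)
    moreover have "0 < exp (- (\<Sum>r\<in>{1..<s}. sq_loss X Y r 0) - real (card {1..<s}) * 1^2 / 2) * (1 / (B + 1)) ^ DIM('a)"
      using R by simp
    ultimately show ?thesis unfolding Z_def F_def Q1_def by linarith
  qed
  have step: "mix_loss (ewa (unif_ball (B + 1)) (sq_loss X Y) s) (sq_loss X Y s) = ln (Z s) - ln (Z (Suc s))"
    if s: "s \<ge> 1" for s
  proof -
    have ew: "ewa (unif_ball (B + 1)) (sq_loss X Y) s = density Q1 (\<lambda>x. ennreal (F s x / Z s))"
      unfolding ewa_def Q1_def F_def Z_def ..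
    have lm[measurable]: "(\<lambda>x. exp (- sq_loss X Y s x)) \<in> borel_measurable Q1"
      unfolding Q1_def unif_ball_meas sq_loss_def by measurable
    have "(\<integral>x. exp (- sq_loss X Y s x) \<partial>ewa (unif_ball (B + 1)) (sq_loss X Y) s)
        = (\<integral>x. (F s x / Z s) *\<^sub>R exp (- sq_loss X Y s x) \<partial>Q1)"
      unfolding ew
    proof (rule integral_density)
      show "(\<lambda>x. F s x / Z s) \<in> borel_measurable Q1" by measurable
      show "AE x in Q1. 0 \<le> F s x / Z s" using Zpos[of s] by (auto intro!: AE_I2 simp: F_def)
    qed (rule lm)
    also have "\<dots> = (\<integral>x. F (Suc s) x / Z s \<partial>Q1)"
    proof (rule Bochner_Integration.integral_cong[OF refl])
      fix x
      have "{1..<Suc s} = insert s {1..<s}" using s by auto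
      hence "F (Suc s) x = F s x * exp (- sq_loss X Y s x)"
        unfolding F_def by (simp add: exp_add[symmetric])
      thus "(F s x / Z s) *\<^sub>R exp (- sq_loss X Y s x) = F (Suc s) x / Z s" by simp
    qed
    also have "\<dots> = Z (Suc s) / Z s" unfolding Z_def by (rule integral_divide_zero)
    finally have "(\<integral>x. exp (- sq_loss X Y s x) \<partial>ewa (unif_ball (B + 1)) (sq_loss X Y) s) = Z (Suc s) / Z s" .
    thus ?thesis unfolding mix_loss_def using Zpos[of s] Zpos[of "Suc s"] by (simp add: ln_div)
  qed
  have Z1: "Z 1 = 1" unfolding Z_def F_def by (simp add: P.prob_space)
  have sum1: "(\<Sum>s=1..t. mix_loss (ewa (unif_ball (B + 1)) (sq_loss X Y) s) (sq_loss X Y s)) = - ln (Z (Suc t))"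
  proof -
    have "(\<Sum>s=1..t. mix_loss (ewa (unif_ball (B + 1)) (sq_loss X Y) s) (sq_loss X Y s))
        = (\<Sum>s=1..t. (ln (Z s) - ln (Z (Suc s))))"
      by (rule sum.cong) (auto simp: step)
    also have "\<dots> = ln (Z 1) - ln (Z (Suc t))" by (rule telescope_nat)
    finally show ?thesis using Z1 by simp
  qed
  define p where "p = real DIM('a)"
  define M where "M = max p (real t)"
  define e where "e = sqrt (p / M)"
  define S where "S = (\<Sum>s=1..t. sq_loss X Y s \<theta>bar)"
  have p0: "p > 0" unfolding p_def by simp
  have M0: "M > 0" "p \<le> M" "real t \<le> M" unfolding M_def using p0 by auto
  have e0: "e > 0" unfolding e_def using p0 M0 by simp
  have e1: "e \<le> 1" unfolding e_def using p0 M0 by simp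
  have e2: "e^2 = p / M" unfolding e_def using p0 M0 by simp
  have I: "{1..<Suc t} = {1..t}" by auto
  have low: "exp (- S - real t * e^2 / 2) * (e / (B + 1)) ^ DIM('a) \<le> Z (Suc t)"
    using Z_lower[where I="{1..<Suc t}" and Y=Y and X=X, OF B e0 e1 th _ XI[of _ "Suc t"]] unfolding Z_def F_def Q1_def S_def I by simp
  have Lpos: "0 < exp (- S - real t * e^2 / 2) * (e / (B + 1)) ^ DIM('a)" using e0 R by simp
  have "ln (exp (- S - real t * e^2 / 2) * (e / (B + 1)) ^ DIM('a)) \<le> ln (Z (Suc t))"
    using low Lpos by simp
  hence lnZ: "- S - real t * e^2 / 2 + p * (ln e - ln (B + 1)) \<le> ln (Z (Suc t))"
    using e0 R by (simp add: ln_mult ln_realpow ln_div p_def)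
  have lne: "ln e = (ln p - ln M) / 2"
    unfolding e_def using p0 M0 by (simp add: ln_sqrt ln_div)
  have te: "real t * e^2 / 2 \<le> p / 2"
    unfolding e2 using M0 p0 by (simp add: field_simps mult_right_mono)
  have rhs: "ln ((B + 1)^2 * exp 1 * M / p) = 2 * ln (B + 1) + 1 + ln M - ln p"
    using R M0 p0 by (simp add: ln_mult ln_div ln_realpow)
  have "- ln (Z (Suc t)) - S \<le> p / 2 * (2 * ln (B + 1) + 1 + ln M - ln p)"
    using lnZ te unfolding lne by (simp add: field_simps)
  thus ?thesis unfolding sum1 S_def[symmetric] using rhs by (simp add: p_def M_def)
qed

end
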